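(* Let $n\ge1$, $t_1<\dots<t_n$, $p_0,\dots,p_n>0$, $p=\sum_{j=0}^n p_j\chi_{I_j}$ with $I_0=(-\infty,t_1]$, $I_j=(t_j,t_{j+1}]$ ($1\le j\le n-1$), $I_n=(t_n,\infty)$, and $q_k=p_k^{-1/2}$. Let $\Phi^\pm$ be the functions defined in the context. Then $\Phi^+$ and $\Phi^-$ are uniformly bounded on $(0,\infty)\times\mathbb{R}$, i.e. $\sup_{\lambda>0,\,x\in\mathbb{R}}\big(|\Phi^+(\lambda,x)|+|\Phi^-(\lambda,x)|\big)<\infty$.
   Context: For $z\in\mathbb{C}\setminus(-\infty,0]$, $\sqrt z$ is the principal square root. For $1\le k\le n$ let $$L_k(z)=\frac12\begin{bmatrix}\left(1+\frac{q_k}{q_{k-1}}\right)e^{it_k(q_{k-1}-q_k)\sqrt z} & \left(1-\frac{q_k}{q_{k-1}}\right)e^{-it_k(q_{k-1}+q_k)\sqrt z}\\ \left(1-\frac{q_k}{q_{k-1}}\right)e^{it_k(q_{k-1}+q_k)\sqrt z} & \left(1+\frac{q_k}{q_{k-1}}\right)e^{-it_k(q_{k-1}-q_k)\sqrt z}\end{bmatrix},\qquad R_k(z)=L_k(z)^{-1}.$$ Define $a_n^+=1$, $b_n^+=0$, $(a_l^+,b_l^+)^T=R_{l+1}(z)(a_{l+1}^+,b_{l+1}^+)^T$ for $l=n-1,\dots,0$; and $a_0^-=0$, $b_0^-=1$, $(a_j^-,b_j^-)^T=L_j(z)(a_{j-1}^-,b_{j-1}^-)^T$ for $j=1,\dots,n$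 (the connection coefficients). Set $\Phi^\pm(z,x)=a_k^\pm(z)e^{iq_k\sqrt z x}+b_k^\pm(z)e^{-iq_k\sqrt z x}$ for $x\in I_k$, $0\le k\le n$. These are solutions of $-(pf')'=zf$ with $f,pf'$ locally absolutely continuous. *)

theory Defs
  imports "HOL-Analysis.Analysis"
begin

text \<open>Coefficients of the piecewise constant p are p 0, ..., p n; jump points t 1 < ... < t n.\<close>

definition qc :: "(nat \<Rightarrow> real) \<Rightarrow> nat \<Rightarrow> real" where
  "qc p k = p k powr (-1/2)"

definition Iv :: "nat \<Rightarrow> (nat \<Rightarrow> real) \<Rightarrow> nat \<Rightarrow> real set" where
  "Iv n t k = (if k = 0 then {..t 1} else if k = n then {t n<..} else {t k<..t (Suc k)})"

definition Lmat :: "(nat \<Rightarrow> real) \<Rightarrow> (nat \<Rightarrow> real) \<Rightarrow> nat \<Rightarrow> complex \<Rightarrow> complex^2^2" where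
  "Lmat t p k z =
    (let a = complex_of_real (qc p (k - 1)); b = complex_of_real (qc p k);
         s = csqrt z; tk = complex_of_real (t k) in
     vector [
       vector [(1/2) * (1 + b/a) * exp (\<i> * tk * (a - b) * s),
               (1/2) * (1 - b/a) * exp (- \<i> * tk * (a + b) * s)],
       vector [(1/2) * (1 - b/a) * exp (\<i> * tk * (a + b) * s),
               (1/2) * (1 + b/a) * exp (- \<i> * tk * (a - b) * s)]])"

definition Rmat :: "(nat \<Rightarrow> real) \<Rightarrow> (nat \<Rightarrow> real) \<Rightarrow> nat \<Rightarrow> complex \<Rightarrow> complex^2^2" where
  "Rmat t p k z = matrix_inv (Lmat t p k z)"

text \<open>cplus_aux n t p z m = (a_{n-m}^+, b_{n-m}^+).\<close>
fun cplus_aux :: "nat \<Rightarrow> (nat \<Rightarrow> real) \<Rightarrow> (nat \<Rightarrow> real) \<Rightarrow> complex \<Rightarrow> nat \<Rightarrow> complex^2" where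
  "cplus_aux n t p z 0 = vector [1, 0]"
| "cplus_aux n t p z (Suc m) = Rmat t p (n - m) z *v cplus_aux n t p z m"

definition cplus :: "nat \<Rightarrow> (nat \<Rightarrow> real) \<Rightarrow> (nat \<Rightarrow> real) \<Rightarrow> complex \<Rightarrow> nat \<Rightarrow> complex^2" where
  "cplus n t p z l = cplus_aux n t p z (n - l)"

fun cminus :: "(nat \<Rightarrow> real) \<Rightarrow> (nat \<Rightarrow> real) \<Rightarrow> complex \<Rightarrow> nat \<Rightarrow> complex^2" where
  "cminus t p z 0 = vector [0, 1]"
| "cminus t p z (Suc j) = Lmat t p (Suc j) z *v cminus t p z j"

definition Phi_of :: "nat \<Rightarrow> (nat \<Rightarrow> real) \<Rightarrow> (nat \<Rightarrow> real) \<Rightarrow> (nat \<Rightarrow> complex^2) \<Rightarrow> complex \<Rightarrow> real \<Rightarrow> complex" where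
  "Phi_of n t p c z x =
     (\<Sum>k\<le>n. if x \<in> Iv n t k then
        (c k $ 1) * exp (\<i> * complex_of_real (qc p k) * csqrt z * complex_of_real x)
      + (c k $ 2) * exp (- \<i> * complex_of_real (qc p k) * csqrt z * complex_of_real x)
      else 0)"

definition Phi_plus :: "nat \<Rightarrow> (nat \<Rightarrow> real) \<Rightarrow> (nat \<Rightarrow> real) \<Rightarrow> complex \<Rightarrow> real \<Rightarrow> complex" where
  "Phi_plus n t p z x = Phi_of n t p (\<lambda>k. cplus n t p z k) z x"

definition Phi_minus :: "nat \<Rightarrow> (nat \<Rightarrow> real) \<Rightarrow> (nat \<Rightarrow> real) \<Rightarrow> complex \<Rightarrow> real \<Rightarrow> complex" where
  "Phi_minus n t p z x = Phi_of n t p (\<lambda>k. cminus t p z k) z x"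

end

theory Submission
  imports Defs
begin

definition Lg :: "complex \<Rightarrow> complex \<Rightarrow> complex \<Rightarrow> complex \<Rightarrow> complex^2^2" where
  "Lg c d e1 e2 = vector [vector [c*e1, d*e2], vector [d*inverse e2, c*inverse e1]]"
definition Mg :: "complex \<Rightarrow> complex \<Rightarrow> complex \<Rightarrow> complex \<Rightarrow> complex^2^2" where
  "Mg c d e1 e2 = vector [vector [c*inverse e1/(c^2-d^2), -d*e2/(c^2-d^2)],
                          vector [-d*inverse e2/(c^2-d^2), c*e1/(c^2-d^2)]]"

lemma LM1: assumes "e1 \<noteq> 0" "e2 \<noteq> 0" "c^2-d^2 \<noteq> 0"
  shows "Lg c d e1 e2 ** Mg c d e1 e2 = mat 1" "Mg c d e1 e2 ** Lg c d e1 e2 = mat 1"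
  using assms
proof -
  have i1: "e1 * inverse e1 = 1" "e2 * inverse e2 = 1" using assms by auto
  have D: "(c*c - d*d) / (c^2-d^2) = 1" using assms by (simp add: power2_eq_square)
  have D3: "c * (c / (c^2 - d^2)) - d * (d / (c^2 - d^2)) = 1"
    using D by (simp add: diff_divide_distrib times_divide_eq_right)
  have D2: "c * (c / (c^2 - d^2)) = 1 + d * (d / (c^2 - d^2))" using D3 by (metis diff_eq_eq)
  show "Lg c d e1 e2 ** Mg c d e1 e2 = mat 1"
    apply (simp add: vec_eq_iff forall_2 matrix_matrix_mult_def sum_2 mat_def Lg_def Mg_def)
    apply (simp add: algebra_simps diff_divide_distrib[symmetric] add_divide_distrib[symmetric] D i1 flip: times_divide_eq_right)
    using D2 by simp
  show "Mg c d e1 e2 ** Lg c d e1 e2 = mat 1"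
    apply (simp add: vec_eq_iff forall_2 matrix_matrix_mult_def sum_2 mat_def Lg_def Mg_def)
    apply (simp add: algebra_simps diff_divide_distrib[symmetric] add_divide_distrib[symmetric] D i1 flip: times_divide_eq_right)
    using D2 by simp
qed

lemma inv_unique: fixes A :: "complex^2^2"
  assumes "A ** M = mat 1" "M ** A = mat 1" shows "matrix_inv A = M"
proof -
  have ex: "\<exists>A'. A ** A' = mat 1 \<and> A' ** A = mat 1" using assms by blast
  have X: "A ** matrix_inv A = mat 1 \<and> matrix_inv A ** A = mat 1"
    unfolding matrix_inv_def by (rule someI_ex[OF ex])
  have "matrix_inv A = matrix_inv A ** (A ** M)" by (simp add: assms)
  also have "\<dots> = (matrix_inv A ** A) ** M" by (simp add: matrix_mul_assoc)
  also have "\<dots> = M" using X by simp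
  finally show ?thesis .
qed

lemma mv_bound: fixes A :: "complex^2^2"
  assumes "\<And>i j. norm (A$i$j) \<le> B"
  shows "norm ((A *v x)$1) + norm ((A *v x)$2) \<le> 2*B*(norm (x$1) + norm (x$2))"
proof -
  have h: "norm ((A *v x)$i) \<le> B*(norm (x$1) + norm (x$2))" for i
  proof -
    have "norm ((A *v x)$i) = norm (A$i$1 * x$1 + A$i$2 * x$2)"
      by (simp add: matrix_vector_mult_def sum_2)
    also have "\<dots> \<le> norm (A$i$1) * norm (x$1) + norm (A$i$2) * norm (x$2)"
      by (metis norm_mult norm_triangle_ineq)
    also have "\<dots> \<le> B * norm (x$1) + B * norm (x$2)"
      by (intro add_mono mult_right_mono assms) auto
    finally show ?thesis by (simp add: algebra_simps)
  qed
  from h[of 1] h[of 2] show ?thesis by simp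
qed

lemma Lmat_eq: assumes "lam > 0"
  shows "Lmat t p k (of_real lam) = Lg (of_real ((1 + qc p k/qc p (k-1))/2)) (of_real ((1 - qc p k/qc p (k-1))/2))
     (exp (\<i> * of_real (t k * (qc p (k-1) - qc p k) * sqrt lam)))
     (exp (\<i> * of_real (- (t k * (qc p (k-1) + qc p k) * sqrt lam))))"
proof -
  define a where "a = qc p (k-1)"
  define b where "b = qc p k"
  have s: "csqrt (of_real lam) = of_real (sqrt lam)" using assms by (simp add: csqrt_of_real)
  have e1: "exp (\<i> * of_real (t k) * (of_real a - of_real b) * of_real (sqrt lam)) = exp (\<i> * of_real (t k * (a - b) * sqrt lam))"
    by (simp add: algebra_simps)
  have e2: "exp (- \<i> * of_real (t k) * (of_real a + of_real b) * of_real (sqrt lam)) = exp (\<i> * of_real (- (t k * (a + b) * sqrt lam)))"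
    by (simp add: algebra_simps)
  have e3: "exp (\<i> * of_real (t k) * (of_real a + of_real b) * of_real (sqrt lam)) = inverse (exp (\<i> * of_real (- (t k * (a + b) * sqrt lam))))"
    by (simp add: exp_minus[symmetric] algebra_simps)
  have e4: "exp (- \<i> * of_real (t k) * (of_real a - of_real b) * of_real (sqrt lam)) = inverse (exp (\<i> * of_real (t k * (a - b) * sqrt lam)))"
    by (simp add: exp_minus[symmetric] algebra_simps)
  show ?thesis
    unfolding Lmat_def Let_def s e1 e2 e3 e4 Lg_def a_def[symmetric] b_def[symmetric]
    by simp
qed

lemma Lg_bound: assumes "norm c \<le> B" "norm d \<le> B" "norm e1 = 1" "norm e2 = 1"
  shows "norm (Lg c d e1 e2 $ i $ j) \<le> B"
  using assms exhaust_2[of i] exhaust_2[of j]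
  by (auto simp: Lg_def norm_mult norm_inverse)

lemma Mg_bound: assumes "norm c \<le> B" "norm d \<le> B" "norm e1 = 1" "norm e2 = 1"
  shows "norm (Mg c d e1 e2 $ i $ j) \<le> B / norm (c^2 - d^2)"
  using assms exhaust_2[of i] exhaust_2[of j]
  by (auto simp: Mg_def norm_mult norm_inverse norm_divide divide_right_mono)

definition rr :: "(nat \<Rightarrow> real) \<Rightarrow> nat \<Rightarrow> real" where
  "rr p k = qc p k / qc p (k-1)"
definition EE :: "(nat \<Rightarrow> real) \<Rightarrow> nat \<Rightarrow> real" where
  "EE p k = (1 + rr p k)/2 + (1 + rr p k)/(2 * rr p k)"

lemma mats_bound:
  assumes "lam > 0" "qc p k > 0" "qc p (k-1) > 0"
  shows "norm (Lmat t p k (of_real lam) $ i $ j) \<le> EE p k"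
    and "norm (Rmat t p k (of_real lam) $ i $ j) \<le> EE p k"
proof -
  define r where "r = rr p k"
  have r: "r > 0" using assms by (simp add: r_def rr_def)
  define c where "c = complex_of_real ((1 + r)/2)"
  define d where "d = complex_of_real ((1 - r)/2)"
  define e1 where "e1 = exp (\<i> * of_real (t k * (qc p (k-1) - qc p k) * sqrt lam))"
  define e2 where "e2 = exp (\<i> * of_real (- (t k * (qc p (k-1) + qc p k) * sqrt lam)))"
  have L: "Lmat t p k (of_real lam) = Lg c d e1 e2"
    unfolding c_def d_def e1_def e2_def r_def rr_def by (rule Lmat_eq[OF assms(1)])
  have n1: "norm e1 = 1" "norm e2 = 1" unfolding e1_def e2_def by simp_all
  have "norm c = abs ((1+r)/2)" unfolding c_def by (simp only: norm_of_real)
  then have nc: "norm c \<le> (1+r)/2" using r by simp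
  have "norm d = abs ((1-r)/2)" unfolding d_def by (simp only: norm_of_real)
  then have nd: "norm d \<le> (1+r)/2" using r by simp
  have rr: "((1+r)/2)^2 - ((1-r)/2)^2 = r" by (simp add: power2_eq_square field_simps)
  have cd: "c^2 - d^2 = of_real r"
    unfolding c_def d_def of_real_power[symmetric] of_real_diff[symmetric] rr ..
  have cd0: "c^2 - d^2 \<noteq> 0" using cd r by simp
  have ne: "e1 \<noteq> 0" "e2 \<noteq> 0" unfolding e1_def e2_def by simp_all
  have R: "Rmat t p k (of_real lam) = Mg c d e1 e2"
    unfolding Rmat_def L by (rule inv_unique; rule LM1[OF ne cd0])
  have Ek: "EE p k = (1+r)/2 + (1+r)/(2*r)" by (simp add: EE_def r_def)
  have "norm (Lmat t p k (of_real lam) $ i $ j) \<le> (1+r)/2"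
    unfolding L by (rule Lg_bound[OF nc nd n1])
  also have "\<dots> \<le> EE p k" unfolding Ek using r by simp
  finally show "norm (Lmat t p k (of_real lam) $ i $ j) \<le> EE p k" .
  have "norm (Rmat t p k (of_real lam) $ i $ j) \<le> ((1+r)/2) / norm (c^2-d^2)"
    unfolding R by (rule Mg_bound[OF nc nd n1])
  also have "\<dots> = (1+r)/(2*r)" using r by (simp add: cd)
  also have "\<dots> \<le> EE p k" unfolding Ek using r by simp
  finally show "norm (Rmat t p k (of_real lam) $ i $ j) \<le> EE p k" .
qed


definition sv :: "complex^2 \<Rightarrow> real" where "sv v = norm (v$1) + norm (v$2)"

lemma Phi_bound:
  assumes "lam > 0" "\<And>k. k \<le> n \<Longrightarrow> sv (c k) \<le> K"
  shows "norm (Phi_of n t p c (of_real lam) x) \<le> real (n+1) * K"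
proof -
  have K0: "0 \<le> K" using assms(2)[of 0] by (simp add: sv_def) (smt (verit) norm_ge_zero)
  have s: "csqrt (of_real lam) = of_real (sqrt lam)" using assms by (simp add: csqrt_of_real)
  have ex: "norm (exp (\<i> * of_real q * csqrt (of_real lam) * of_real x)) = 1"
           "norm (exp (- \<i> * of_real q * csqrt (of_real lam) * of_real x)) = 1" for q
  proof -
    have h1: "\<i> * of_real q * csqrt (of_real lam) * of_real x = \<i> * of_real (q * sqrt lam * x)"
      unfolding s by simp
    show "norm (exp (\<i> * of_real q * csqrt (of_real lam) * of_real x)) = 1" by (subst h1) (rule norm_exp_i_times)
    have h2: "- \<i> * of_real q * csqrt (of_real lam) * of_real x = \<i> * of_real (- (q * sqrt lam * x))"
      unfolding s by simp
    show "norm (exp (- \<i> * of_real q * csqrt (of_real lam) * of_real x)) = 1" by (subst h2) (rule norm_exp_i_times)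
  qed
  have tm: "norm (if x \<in> Iv n t k then
        (c k $ 1) * exp (\<i> * complex_of_real (qc p k) * csqrt (of_real lam) * complex_of_real x)
      + (c k $ 2) * exp (- \<i> * complex_of_real (qc p k) * csqrt (of_real lam) * complex_of_real x)
      else 0) \<le> K" if "k \<in> {..n}" for k
  proof (cases "x \<in> Iv n t k")
    case True
    have "norm ((c k $ 1) * exp (\<i> * complex_of_real (qc p k) * csqrt (of_real lam) * complex_of_real x)
      + (c k $ 2) * exp (- \<i> * complex_of_real (qc p k) * csqrt (of_real lam) * complex_of_real x))
      \<le> sv (c k)"
      unfolding sv_def by (rule order_trans[OF norm_triangle_ineq]) (simp only: norm_mult ex mult_1_right order_refl)
    also have "\<dots> \<le> K" using assms(2) that by simp
    finally show ?thesis using True by simp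
  qed (simp add: K0)
  have "norm (Phi_of n t p c (of_real lam) x) \<le> (\<Sum>k\<le>n. K)"
    unfolding Phi_of_def by (rule order_trans[OF norm_sum sum_mono[OF tm]])
  then show ?thesis by simp
qed

lemma mv_sv: fixes A :: "complex^2^2"
  assumes "\<And>i j. norm (A$i$j) \<le> B"
  shows "sv (A *v x) \<le> 2 * B * sv x"
  unfolding sv_def by (rule mv_bound[OF assms])

lemma sv_nonneg: "sv v \<ge> 0" by (simp add: sv_def)

theorem lemma3p3:
  fixes n :: nat and t p :: "nat \<Rightarrow> real"
  assumes "n \<ge> 1"
    and "\<And>j. 1 \<le> j \<Longrightarrow> j < n \<Longrightarrow> t j < t (Suc j)"
    and "\<And>k. k \<le> n \<Longrightarrow> p k > 0"
  shows "\<exists>C. \<forall>lam::real. \<forall>x::real. lam > 0 \<longrightarrow>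
           cmod (Phi_plus n t p (complex_of_real lam) x) + cmod (Phi_minus n t p (complex_of_real lam) x) \<le> C"
proof -
  have qpos: "qc p k > 0" if "k \<le> n" for k using assms(3)[OF that] by (simp add: qc_def)
  have rpos: "rr p k > 0" if "1 \<le> k" "k \<le> n" for k using qpos that by (simp add: rr_def)
  have Epos: "EE p k \<ge> 0" if "1 \<le> k" "k \<le> n" for k using rpos[OF that] by (simp add: EE_def)
  define G where "G = 1 + 2 * (\<Sum>k\<in>{1..n}. EE p k)"
  have "0 \<le> (\<Sum>k\<in>{1..n}. EE p k)" by (rule sum_nonneg) (use Epos in auto)
  then have G1: "G \<ge> 1" unfolding G_def by simp
  have GE: "2 * EE p k \<le> G" if "1 \<le> k" "k \<le> n" for k
  proof -
    have "EE p k \<le> (\<Sum>k\<in>{1..n}. EE p k)"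
      by (rule member_le_sum) (use that Epos in auto)
    then show ?thesis unfolding G_def by simp
  qed
  have LB: "norm (Lmat t p k (of_real lam) $ i $ j) \<le> EE p k"
    and RB: "norm (Rmat t p k (of_real lam) $ i $ j) \<le> EE p k"
    if "lam > 0" "1 \<le> k" "k \<le> n" for lam k i j
    using mats_bound[OF that(1) qpos[OF that(3)] qpos[of "k-1"]] that by auto
  have CM: "sv (cminus t p (of_real lam) j) \<le> G^j" if "lam > 0" "j \<le> n" for lam j
    using that(2)
  proof (induction j)
    case 0 then show ?case by (simp add: sv_def)
  next
    case (Suc j)
    have "sv (cminus t p (of_real lam) (Suc j)) \<le> 2 * EE p (Suc j) * sv (cminus t p (of_real lam) j)"
      by simp (rule mv_sv[OF LB[OF that(1)]], use Suc in auto)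
    also have "\<dots> \<le> G * G^j"
      by (rule mult_mono) (use Suc GE sv_nonneg G1 in auto)
    finally show ?case by simp
  qed
  have CP: "sv (cplus_aux n t p (of_real lam) m) \<le> G^m" if "lam > 0" "m \<le> n" for lam m
    using that(2)
  proof (induction m)
    case 0 then show ?case by (simp add: sv_def)
  next
    case (Suc m)
    have "sv (cplus_aux n t p (of_real lam) (Suc m)) \<le> 2 * EE p (n - m) * sv (cplus_aux n t p (of_real lam) m)"
      by simp (rule mv_sv[OF RB[OF that(1)]], use Suc in auto)
    also have "\<dots> \<le> G * G^m"
      by (rule mult_mono) (use Suc GE sv_nonneg G1 in auto)
    finally show ?case by simp
  qed
  have Gm: "G^m \<le> G^n" if "m \<le> n" for m using G1 that by (simp add: power_increasing)
  show ?thesis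
  proof (intro exI allI impI)
    fix lam x :: real assume lam: "lam > 0"
    have "cmod (Phi_plus n t p (complex_of_real lam) x) \<le> real (n+1) * G^n"
      unfolding Phi_plus_def
      by (rule Phi_bound[OF lam]) (metis CP[OF lam] Gm diff_le_self order_trans cplus_def)
    moreover have "cmod (Phi_minus n t p (complex_of_real lam) x) \<le> real (n+1) * G^n"
      unfolding Phi_minus_def
      by (rule Phi_bound[OF lam]) (use CM[OF lam] Gm in \<open>auto intro: order_trans\<close>)
    ultimately show "cmod (Phi_plus n t p (complex_of_real lam) x) + cmod (Phi_minus n t p (complex_of_real lam) x)
       \<le> 2 * (real (n+1) * G^n)" by simp
  qed
qed

end
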